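(* Let $U$ and $X$ be compact metric spaces, let $T:U\to U$ be a surjective map (not necessarily continuous), and let $g:U\times X\to X$ be a continuous driven system which is SI-invertible. Let $Y_T\subset X\times X$ be the relation induced by $(U,T)$. Then there exists a well-defined map $G_T:Y_T\to Y_T$ such that for every orbit $\bar u=\{u_k\}_{k\in\mathbb Z}$ of $T$, every solution $\{x_k\}_{k\in\mathbb Z}$ of $g$ for the input $\bar u$, and every $n\in\mathbb Z$, $$G_T(x_{n-1},x_n)=(x_n,x_{n+1}).$$
   Context: An orbit of $T$ is a bi-infinite sequence $\{u_n\}_{n\in\mathbb Z}\subset U$ with $u_{n+1}=Tu_n$ for all $n\in\mathbb Z$. A driven system is a continuous map $g:U\times X\to X$ with $U,X$ compact metric spaces. Given a bi-infinite input $\bar u=\{u_n\}_{n\in\mathbb Z}\subset U$, a solution of $g$ for $\bar u$ is a bi-infinite sequence $\{x_n\}_{n\in\mathbb Z}\subset X$ with $x_{n+1}=g(u_n,x_n)$ for all $n\in\mathbb Z$. The driven system $g$ is SI-invertible (state-input invertible) if for every $x\in X$ the map $g(\cdot,x):U\to X$ is injective, i.e. whenever $x_{n+1}=g(u_n,x_n)$, the input $u_n$ is uniquely determined by $x_n$ and $x_{n+1}$. The relation induced by $(U,T)$ is $$Y_T:=\{(x_{n-1},x_n): \{x_k\}_{k\in\mathbb Z}\text{ is a solution of }g\text{ for some orbit of }T,\ n\in\mathbb Z\}.$$ *)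

theory Defs
  imports "HOL-Analysis.Analysis"
begin

definition is_orbit :: "'u set \<Rightarrow> ('u \<Rightarrow> 'u) \<Rightarrow> (int \<Rightarrow> 'u) \<Rightarrow> bool" where
  "is_orbit U T u \<longleftrightarrow> (\<forall>n. u n \<in> U) \<and> (\<forall>n. u (n + 1) = T (u n))"

definition is_solution :: "'x set \<Rightarrow> ('u \<times> 'x \<Rightarrow> 'x) \<Rightarrow> (int \<Rightarrow> 'u) \<Rightarrow> (int \<Rightarrow> 'x) \<Rightarrow> bool" where
  "is_solution X g u x \<longleftrightarrow> (\<forall>n. x n \<in> X) \<and> (\<forall>n. x (n + 1) = g (u n, x n))"

definition SI_invertible :: "'u set \<Rightarrow> 'x set \<Rightarrow> ('u \<times> 'x \<Rightarrow> 'x) \<Rightarrow> bool" where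
  "SI_invertible U X g \<longleftrightarrow> (\<forall>x\<in>X. inj_on (\<lambda>u. g (u, x)) U)"

definition induced_relation ::
  "'u set \<Rightarrow> ('u \<Rightarrow> 'u) \<Rightarrow> 'x set \<Rightarrow> ('u \<times> 'x \<Rightarrow> 'x) \<Rightarrow> ('x \<times> 'x) set" where
  "induced_relation U T X g =
     {(x (n - 1), x n) | u x n. is_orbit U T u \<and> is_solution X g u x}"

end

theory Submission
  imports Defs
begin

theorem theorem3:
  fixes U :: "'u::metric_space set" and X :: "'x::metric_space set"
    and T :: "'u \<Rightarrow> 'u" and g :: "'u \<times> 'x \<Rightarrow> 'x"
  assumes "compact U" and "compact X"
    and "T ` U = U"
    and "continuous_on (U \<times> X) g" and "g ` (U \<times> X) \<subseteq> X"
    and "SI_invertible U X g"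
  shows "\<exists>G. G ` induced_relation U T X g \<subseteq> induced_relation U T X g \<and>
           (\<forall>u x n. is_orbit U T u \<longrightarrow> is_solution X g u x \<longrightarrow>
              G (x (n - 1), x n) = (x n, x (n + 1)))"
proof -
  define G where "G = (\<lambda>p::'x\<times>'x. (snd p, g (T (THE v. v \<in> U \<and> g (v, fst p) = snd p), snd p)))"
  have key: "G (x (n - 1), x n) = (x n, x (n + 1))"
    if o: "is_orbit U T u" and s: "is_solution X g u x" for u x n
  proof -
    have uU: "u (n-1) \<in> U" and xX: "x (n-1) \<in> X" using o s by (auto simp: is_orbit_def is_solution_def)
    have e: "x n = g (u (n-1), x (n-1))" using s unfolding is_solution_def
      by (metis diff_add_cancel)
    have inj: "inj_on (\<lambda>v. g (v, x (n-1))) U" using assms(6) xX by (auto simp: SI_invertible_def)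
    have th: "(THE v. v \<in> U \<and> g (v, x (n-1)) = x n) = u (n-1)"
      apply (rule the_equality)
      using uU e inj by (auto simp: inj_on_def)
    have "T (u (n-1)) = u n" using o unfolding is_orbit_def by (metis diff_add_cancel)
    then show ?thesis using s th unfolding G_def is_solution_def by simp
  qed
  have "G ` induced_relation U T X g \<subseteq> induced_relation U T X g"
  proof
    fix q assume "q \<in> G ` induced_relation U T X g"
    then obtain u x n where o: "is_orbit U T u" and s: "is_solution X g u x"
      and q: "q = G (x (n - 1), x n)" unfolding induced_relation_def by blast
    have "q = (x ((n+1) - 1), x (n+1))" using key[OF o s] q by simp
    then show "q \<in> induced_relation U T X g" using o s unfolding induced_relation_def by blast
  qed
  then show ?thesis using key by blast
qed

end
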